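(* Let $J\subset\mathbb N_+$ be finite and let $\mathcal M(M_J,P)_l$ denote the part of the Margolis homology $\mathcal M(M_J,P)=\ker P/\operatorname{im}P$ of reduced length $l$. If $|J|=2t$, then $\dim_{\mathbb F_2}\mathcal M(M_J,P)_l=2^t$ for $l=t$ and $0$ otherwise. If $|J|=2t+1$, then $\dim_{\mathbb F_2}\mathcal M(M_J,P)_l=2^t$ for $l\in\{t,t+1\}$ and $0$ otherwise.
   Context: Over $\mathbb F_2$, $\Lambda(Q_1,P)$ is the exterior algebra on $Q_1,P$, a Hopf algebra with $Q_1$ primitive and $\Delta(P)=P\otimes1+Q_1\otimes Q_1+1\otimes P$. For $i\in\mathbb N_+$, $M_i$ has basis $t_i,x_i$ with $Q_1(x_i)=t_i$, $Q_1(t_i)=0$, $P=0$; for finite $J\subset\mathbb N_+$, $M_J=\bigotimes_{j\in J}M_j$ with action through the coproduct. $M_J$ has basis $t_Ix_{J\setminus I}$ ($I\subseteq J$; the tensor with factor $t_j$ for $j\in I$, $x_j$ otherwise), whose reduced length is $|J\setminus I|$. $Q_1$ lowers reduced length by $1$ and $P$ by $2$, so $\mathcal M(M_J,P)$ splits as a direct sum of its reduced-length-homogeneous parts $\mathcal M(M_J,P)_l$. *)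

theory Defs
  imports Main "HOL.Vector_Spaces" "HOL-Library.Z2" "HOL-Library.Function_Algebras"
begin

text \<open>An element of M_J is represented by its coefficient function on the basis
  t_I x_(J - I), I a subset of J: a map v :: nat set => bit vanishing outside Pow J.\<close>

definition MJ :: "nat set \<Rightarrow> (nat set \<Rightarrow> bit) set" where
  "MJ J = {v. \<forall>I. v I \<noteq> 0 \<longrightarrow> I \<subseteq> J}"

definition scaleF2 :: "bit \<Rightarrow> (nat set \<Rightarrow> bit) \<Rightarrow> (nat set \<Rightarrow> bit)" where
  "scaleF2 c v = (\<lambda>I. c * v I)"

definition redlen_part :: "nat set \<Rightarrow> nat \<Rightarrow> (nat set \<Rightarrow> bit) set" where
  "redlen_part J l = {v \<in> MJ J. \<forall>I. v I \<noteq> 0 \<longrightarrow> card (J - I) = l}"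

text \<open>Action of P on M_J through the iterated coproduct
  P |-> sum_i P_i + sum_(i<j) Q1_i Q1_j, with P = 0 on each M_j:
  P(t_K x_(J-K)) = sum over 2-subsets {i,j} of J - K of t_(K+{i,j}) x_(J-K-{i,j}).\<close>
definition P_act :: "nat set \<Rightarrow> (nat set \<Rightarrow> bit) \<Rightarrow> (nat set \<Rightarrow> bit)" where
  "P_act J v = (\<lambda>I. if I \<subseteq> J then (\<Sum>K\<in>{K. K \<subseteq> I \<and> card K = 2}. v (I - K)) else 0)"

definition margolis_ker :: "nat set \<Rightarrow> nat \<Rightarrow> (nat set \<Rightarrow> bit) set" where
  "margolis_ker J l = {v \<in> redlen_part J l. P_act J v = (\<lambda>_. 0)}"

definition margolis_im :: "nat set \<Rightarrow> nat \<Rightarrow> (nat set \<Rightarrow> bit) set" where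
  "margolis_im J l = {P_act J w | w. w \<in> MJ J} \<inter> redlen_part J l"

text \<open>dim over F_2 of M(M_J,P)_l = (ker P)_l / (im P)_l, computed as
  dim (ker P)_l - dim (im P)_l (the latter is a subspace of the former).\<close>
definition margolis_dim :: "nat set \<Rightarrow> nat \<Rightarrow> nat" where
  "margolis_dim J l =
     vector_space.dim scaleF2 (margolis_ker J l) - vector_space.dim scaleF2 (margolis_im J l)"

end

theory Submission
  imports Defs
begin

declare add_bit_eq_xor [simp del] mult_bit_eq_and [simp del]

lemma bit_add_self [simp]: "(x::bit) + x = 0"
  by (cases x) simp_all

lemma fun_bit_add_self [simp]: "(f::'a \<Rightarrow> bit) + f = 0"
  by (simp add: fun_eq_iff)

lemma bit_UNIV: "(UNIV::bit set) = {0,1}"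
  using bit_not_zero_iff by blast

lemma MJ_finite: "finite J \<Longrightarrow> finite (MJ J)"
proof -
  assume "finite J"
  have "MJ J \<subseteq> {f. \<forall>x. (x \<in> Pow J \<longrightarrow> f x \<in> UNIV) \<and> (x \<notin> Pow J \<longrightarrow> f x = 0)}"
    by (force simp: MJ_def)
  moreover have "finite {f. \<forall>x. (x \<in> Pow J \<longrightarrow> f x \<in> (UNIV::bit set)) \<and> (x \<notin> Pow J \<longrightarrow> f x = 0)}"
    by (rule finite_set_of_finite_funs) (simp_all add: \<open>finite J\<close> bit_UNIV)
  ultimately show ?thesis by (rule finite_subset)
qed

interpretation vs: vector_space scaleF2
  by unfold_locales (simp_all add: scaleF2_def fun_eq_iff algebra_simps)

lemma scaleF2_cases: "scaleF2 c v = (if c = 0 then 0 else v)"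
  by (cases c) (simp_all add: scaleF2_def fun_eq_iff)

lemma card_span_F2:
  assumes "finite B" "vs.independent B"
  shows "card (vs.span B) = 2 ^ card B"
  using assms
proof (induction B rule: finite_induct)
  case empty
  then show ?case by simp
next
  case (insert b B)
  have indB: "vs.independent B" using insert.prems vs.independent_mono by blast
  have bnot: "b \<notin> vs.span B" using insert.prems insert.hyps(2) by (simp add: vs.independent_insert)
  have eq: "vs.span (insert b B) = vs.span B \<union> (\<lambda>x. b + x) ` vs.span B"
  proof
    show "vs.span (insert b B) \<subseteq> vs.span B \<union> (\<lambda>x. b + x) ` vs.span B"
    proof
      fix x assume "x \<in> vs.span (insert b B)"
      then obtain k where k: "x - scaleF2 k b \<in> vs.span B" by (auto simp: vs.span_insert)
      show "x \<in> vs.span B \<union> (\<lambda>x. b + x) ` vs.span B"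
      proof (cases "k = 0")
        case True then show ?thesis using k by (simp add: scaleF2_cases)
      next
        case False
        then have "x - b \<in> vs.span B" using k by (simp add: scaleF2_cases)
        moreover have "x = b + (x - b)" by simp
        ultimately show ?thesis by blast
      qed
    qed
  next
    show "vs.span B \<union> (\<lambda>x. b + x) ` vs.span B \<subseteq> vs.span (insert b B)"
      by (auto intro: vs.span_add vs.span_base vs.span_mono[THEN subsetD, of B "insert b B"])
  qed
  have disj: "vs.span B \<inter> (\<lambda>x. b + x) ` vs.span B = {}"
  proof (rule ccontr)
    assume "vs.span B \<inter> (\<lambda>x. b + x) ` vs.span B \<noteq> {}"
    then obtain y where y: "y \<in> vs.span B" "b + y \<in> vs.span B" by auto
    then have "(b + y) - y \<in> vs.span B" by (intro vs.span_diff)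
    then show False using bnot by simp
  qed
  have fin: "finite (vs.span B)"
    using insert.IH[OF indB] by (metis card.infinite power_not_zero zero_neq_numeral)
  have "card (vs.span (insert b B)) = card (vs.span B) + card ((\<lambda>x. b + x) ` vs.span B)"
    unfolding eq by (rule card_Un_disjoint) (use fin disj in auto)
  also have "card ((\<lambda>x. b + x) ` vs.span B) = card (vs.span B)"
    by (rule card_image) (auto simp: inj_on_def)
  finally show ?case using insert.IH[OF indB] insert.hyps by simp
qed

lemma card_subspace_F2:
  assumes "vs.subspace W" "finite W"
  shows "card W = 2 ^ vs.dim W"
proof -
  obtain B where B: "B \<subseteq> W" "vs.independent B" "W \<subseteq> vs.span B" "card B = vs.dim W"
    using vs.basis_exists by blast
  have "vs.span B = W"
    using B assms vs.span_minimal by blast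
  moreover have "finite B" using B assms finite_subset by blast
  ultimately show ?thesis using card_span_F2 B by metis
qed


definition dd :: "nat set \<Rightarrow> (nat set \<Rightarrow> bit) \<Rightarrow> nat set \<Rightarrow> bit" where
  "dd J f = (\<lambda>I. \<Sum>i\<in>J - I. f (insert i I))"
definition ee :: "nat set \<Rightarrow> (nat set \<Rightarrow> bit) \<Rightarrow> nat set \<Rightarrow> bit" where
  "ee J f = (\<lambda>I. if I \<subseteq> J then (\<Sum>i\<in>I. f (I - {i})) else 0)"
definition comb :: "nat \<Rightarrow> (nat set \<Rightarrow> bit) \<Rightarrow> (nat set \<Rightarrow> bit) \<Rightarrow> nat set \<Rightarrow> bit" where
  "comb a p q = (\<lambda>I. if a \<in> I then q (I - {a}) else p I)"

lemma pairs_insert: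
  assumes "a \<notin> I"
  shows "{K. K \<subseteq> insert a I \<and> card K = 2} = {K. K \<subseteq> I \<and> card K = 2} \<union> (\<lambda>i. {a,i}) ` I"
proof (intro equalityI subsetI)
  fix K assume "K \<in> {K. K \<subseteq> insert a I \<and> card K = 2}"
  then obtain x y where K: "K = {x,y}" "x \<noteq> y" "K \<subseteq> insert a I" by (auto simp: card_2_iff)
  show "K \<in> {K. K \<subseteq> I \<and> card K = 2} \<union> (\<lambda>i. {a,i}) ` I"
  proof (cases "a \<in> K")
    case True
    then show ?thesis using K assms by (auto simp: insert_commute)
  next
    case False
    then show ?thesis using K by auto
  qed
next
  fix K assume "K \<in> {K. K \<subseteq> I \<and> card K = 2} \<union> (\<lambda>i. {a,i}) ` I"
  then show "K \<in> {K. K \<subseteq> insert a I \<and> card K = 2}"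
  proof
    assume "K \<in> {K. K \<subseteq> I \<and> card K = 2}" then show ?thesis by auto
  next
    assume "K \<in> (\<lambda>i. {a,i}) ` I"
    then obtain i where "i \<in> I" "K = {a,i}" by auto
    moreover have "a \<noteq> i" using assms \<open>i \<in> I\<close> by auto
    ultimately show ?thesis by auto
  qed
qed

lemma finite_pairs: "finite I \<Longrightarrow> finite {K. K \<subseteq> I \<and> card K = 2}"
  by (rule finite_subset[of _ "Pow I"]) auto

lemma sum_pairs_insert:
  assumes "finite I" "a \<notin> I"
  shows "(\<Sum>K\<in>{K. K \<subseteq> insert a I \<and> card K = 2}. g K)
       = (\<Sum>K\<in>{K. K \<subseteq> I \<and> card K = 2}. g K) + (\<Sum>i\<in>I. g {a,i})"
proof -
  have "(\<Sum>K\<in>{K. K \<subseteq> insert a I \<and> card K = 2}. g K)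
      = (\<Sum>K\<in>{K. K \<subseteq> I \<and> card K = 2}. g K) + (\<Sum>K\<in>(\<lambda>i. {a,i}) ` I. g K)"
    unfolding pairs_insert[OF assms(2)]
    by (rule sum.union_disjoint) (use assms finite_pairs in auto)
  also have "(\<Sum>K\<in>(\<lambda>i. {a,i}) ` I. g K) = (\<Sum>i\<in>I. g {a,i})"
    by (rule sum.reindex_cong[where l="\<lambda>i. {a,i}"]) (use assms in \<open>auto simp: inj_on_def doubleton_eq_iff\<close>)
  finally show ?thesis .
qed

lemma of_nat_bit: "(of_nat n :: bit) = (if even n then 0 else 1)"
  by (induction n) auto

lemma sym_double_sum:
  fixes h :: "'a \<Rightarrow> 'a \<Rightarrow> bit"
  assumes "finite X" "\<And>x y. h x y = h y x"
  shows "(\<Sum>x\<in>X. \<Sum>y\<in>X. h x y) = (\<Sum>x\<in>X. h x x)"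
  using assms(1)
proof (induction X rule: finite_induct)
  case empty then show ?case by simp
next
  case (insert a X)
  have "(\<Sum>x\<in>insert a X. \<Sum>y\<in>insert a X. h x y)
     = h a a + (\<Sum>y\<in>X. h a y) + ((\<Sum>x\<in>X. h x a) + (\<Sum>x\<in>X. \<Sum>y\<in>X. h x y))"
    using insert.hyps by (simp add: sum.distrib add_ac)
  also have "(\<Sum>y\<in>X. h a y) = (\<Sum>x\<in>X. h x a)" using assms(2) by metis
  finally show ?case using insert by (simp add: add.assoc[symmetric])
qed


lemma P_add: "P_act J (f + g) = P_act J f + P_act J g"
  by (simp add: P_act_def fun_eq_iff sum.distrib)
lemma P_zero [simp]: "P_act J 0 = 0"
  by (simp add: P_act_def fun_eq_iff)
lemma dd_add: "dd J (f + g) = dd J f + dd J g"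
  by (simp add: dd_def fun_eq_iff sum.distrib)
lemma dd_zero [simp]: "dd J 0 = 0"
  by (simp add: dd_def fun_eq_iff)
lemma ee_add: "ee J (f + g) = ee J f + ee J g"
  by (simp add: ee_def fun_eq_iff sum.distrib)
lemma comb_add: "comb a p q + comb a p' q' = comb a (p + p') (q + q')"
  by (simp add: comb_def fun_eq_iff)
lemma comb_zero [simp]: "comb a 0 0 = 0"
  by (simp add: comb_def fun_eq_iff)

lemma MJ_zero [simp]: "0 \<in> MJ J"
  by (simp add: MJ_def)
lemma MJ_add: assumes "f \<in> MJ J" "g \<in> MJ J" shows "f + g \<in> MJ J"
proof -
  have "\<And>I. (f + g) I \<noteq> 0 \<Longrightarrow> f I \<noteq> 0 \<or> g I \<noteq> 0" by auto
  then show ?thesis using assms unfolding MJ_def by blast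
qed
lemma MJ_P: "P_act J f \<in> MJ J"
  by (simp add: MJ_def P_act_def del: bit_not_zero_iff)
lemma MJ_ee: "ee J f \<in> MJ J"
  by (simp add: MJ_def ee_def del: bit_not_zero_iff)
lemma MJ_dd: assumes "f \<in> MJ J" shows "dd J f \<in> MJ J"
  unfolding MJ_def
proof (intro CollectI allI impI)
  fix I assume "dd J f I \<noteq> 0"
  then obtain i where "i \<in> J - I" "f (insert i I) \<noteq> 0"
    unfolding dd_def by (metis (mono_tags, lifting) sum.neutral)
  then have "insert i I \<subseteq> J" using assms unfolding MJ_def by blast
  then show "I \<subseteq> J" by blast
qed
lemma MJ_comb:
  assumes "p \<in> MJ J" "q \<in> MJ J"
  shows "comb a p q \<in> MJ (insert a J)"
  unfolding MJ_def
proof (intro CollectI allI impI)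
  fix I assume "comb a p q I \<noteq> 0"
  then show "I \<subseteq> insert a J" using assms unfolding MJ_def comb_def
    by (cases "a \<in> I") auto
qed

lemma MJ_zero_outside: "f \<in> MJ J \<Longrightarrow> \<not> I \<subseteq> J \<Longrightarrow> f I = 0"
  unfolding MJ_def by (metis (mono_tags, lifting) mem_Collect_eq)

lemma comb_inj:
  assumes "a \<notin> J" "p \<in> MJ J" "q \<in> MJ J" "p' \<in> MJ J" "q' \<in> MJ J"
    and "comb a p q = comb a p' q'"
  shows "p = p' \<and> q = q'"
proof
  show "p = p'"
  proof
    fix I show "p I = p' I"
    proof (cases "a \<in> I")
      case True
      then have "\<not> I \<subseteq> J" using assms(1) by auto
      then show ?thesis using assms MJ_zero_outside by metis
    next
      case False
      then show ?thesis using fun_cong[OF assms(6), of I] by (simp add: comb_def)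
    qed
  qed
  show "q = q'"
  proof
    fix I show "q I = q' I"
    proof (cases "a \<in> I")
      case True
      then have "\<not> I \<subseteq> J" using assms(1) by auto
      then show ?thesis using assms MJ_zero_outside by metis
    next
      case False
      then have "insert a I - {a} = I" by auto
      then show ?thesis using fun_cong[OF assms(6), of "insert a I"] by (simp add: comb_def)
    qed
  qed
qed

lemma comb_surj:
  assumes "a \<notin> J" "v \<in> MJ (insert a J)"
  obtains p q where "p \<in> MJ J" "q \<in> MJ J" "v = comb a p q"
proof -
  define p where "p = (\<lambda>I. if a \<in> I then 0 else v I)"
  define q where "q = (\<lambda>I. if a \<in> I then 0 else v (insert a I))"
  have "p \<in> MJ J" using assms unfolding p_def MJ_def by auto
  moreover have "q \<in> MJ J" using assms unfolding q_def MJ_def by auto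
  moreover have "v = comb a p q"
  proof
    fix I show "v I = comb a p q I"
      by (cases "a \<in> I") (auto simp: comb_def p_def q_def insert_absorb)
  qed
  ultimately show ?thesis using that by blast
qed

lemma P_comb:
  assumes "finite J" "a \<notin> J"
  shows "P_act (insert a J) (comb a p q) = comb a (P_act J p) (P_act J q + ee J p)"
proof
  fix I
  show "P_act (insert a J) (comb a p q) I = comb a (P_act J p) (P_act J q + ee J p) I"
  proof (cases "a \<in> I")
    case True
    define I0 where "I0 = I - {a}"
    have I: "I = insert a I0" "a \<notin> I0" using True I0_def by auto
    show ?thesis
    proof (cases "I0 \<subseteq> J")
      case False
      then show ?thesis using I by (auto simp: P_act_def ee_def comb_def)
    next
      case sub: True
      then have fin: "finite I0" using assms finite_subset by blast
      have "P_act (insert a J) (comb a p q) I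
          = (\<Sum>K\<in>{K. K \<subseteq> insert a I0 \<and> card K = 2}. comb a p q (I - K))"
        using sub I by (simp add: P_act_def insert_mono subset_insertI2)
      also have "\<dots> = (\<Sum>K\<in>{K. K \<subseteq> I0 \<and> card K = 2}. comb a p q (I - K))
                     + (\<Sum>i\<in>I0. comb a p q (I - {a,i}))"
        by (rule sum_pairs_insert[OF fin I(2)])
      also have "(\<Sum>K\<in>{K. K \<subseteq> I0 \<and> card K = 2}. comb a p q (I - K))
               = (\<Sum>K\<in>{K. K \<subseteq> I0 \<and> card K = 2}. q (I0 - K))"
      proof (rule sum.cong[OF refl])
        fix K assume "K \<in> {K. K \<subseteq> I0 \<and> card K = 2}"
        then have "a \<in> I - K" "(I - K) - {a} = I0 - K" using I by auto
        then show "comb a p q (I - K) = q (I0 - K)" by (simp add: comb_def)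
      qed
      also have "(\<Sum>i\<in>I0. comb a p q (I - {a,i})) = (\<Sum>i\<in>I0. p (I0 - {i}))"
      proof (rule sum.cong[OF refl])
        fix i assume "i \<in> I0"
        then have h: "a \<notin> I - {a,i}" "I - {a,i} = I0 - {i}" using I by auto
        show "comb a p q (I - {a,i}) = p (I0 - {i})"
          using I(2) h(2) by (simp add: comb_def)
      qed
      finally show ?thesis using sub True
        by (simp add: comb_def P_act_def ee_def flip: I0_def)
    qed
  next
    case False
    show ?thesis
    proof (cases "I \<subseteq> J")
      case False
      then show ?thesis using \<open>a \<notin> I\<close> by (auto simp: P_act_def comb_def)
    next
      case sub: True
      have "P_act (insert a J) (comb a p q) I
          = (\<Sum>K\<in>{K. K \<subseteq> I \<and> card K = 2}. comb a p q (I - K))"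
        using sub by (simp add: P_act_def subset_insertI2)
      also have "\<dots> = (\<Sum>K\<in>{K. K \<subseteq> I \<and> card K = 2}. p (I - K))"
        by (rule sum.cong[OF refl]) (use \<open>a \<notin> I\<close> in \<open>simp add: comb_def\<close>)
      finally show ?thesis using sub \<open>a \<notin> I\<close> by (simp add: comb_def P_act_def)
    qed
  qed
qed

lemma ee_comb:
  assumes "finite J" "a \<notin> J" "p \<in> MJ J"
  shows "ee (insert a J) (comb a p q) = comb a (ee J p) (ee J q + p)"
proof
  fix I
  show "ee (insert a J) (comb a p q) I = comb a (ee J p) (ee J q + p) I"
  proof (cases "a \<in> I")
    case True
    define I0 where "I0 = I - {a}"
    have I: "I = insert a I0" "a \<notin> I0" using True I0_def by auto
    show ?thesis
    proof (cases "I0 \<subseteq> J")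
      case False
      then show ?thesis using I assms(3) by (auto simp: ee_def comb_def MJ_zero_outside)
    next
      case sub: True
      then have fin: "finite I0" using assms finite_subset by blast
      have "ee (insert a J) (comb a p q) I = (\<Sum>i\<in>insert a I0. comb a p q (I - {i}))"
        using sub I by (simp add: ee_def insert_mono subset_insertI2)
      also have "\<dots> = comb a p q (I - {a}) + (\<Sum>i\<in>I0. comb a p q (I - {i}))"
        using fin I by simp
      also have "(\<Sum>i\<in>I0. comb a p q (I - {i})) = (\<Sum>i\<in>I0. q (I0 - {i}))"
      proof (rule sum.cong[OF refl])
        fix i assume "i \<in> I0"
        then have "a \<in> I - {i}" "(I - {i}) - {a} = I0 - {i}" using I by auto
        then show "comb a p q (I - {i}) = q (I0 - {i})" by (simp add: comb_def)
      qed
      also have "comb a p q (I - {a}) = p I0" using I by (simp add: comb_def I0_def)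
      finally show ?thesis using sub True
        by (simp add: comb_def ee_def flip: I0_def add: add.commute)
    qed
  next
    case False
    show ?thesis
    proof (cases "I \<subseteq> J")
      case False
      then show ?thesis using \<open>a \<notin> I\<close> by (auto simp: ee_def comb_def)
    next
      case sub: True
      have "ee (insert a J) (comb a p q) I = (\<Sum>i\<in>I. comb a p q (I - {i}))"
        using sub by (simp add: ee_def subset_insertI2)
      also have "\<dots> = (\<Sum>i\<in>I. p (I - {i}))"
        by (rule sum.cong[OF refl]) (use \<open>a \<notin> I\<close> in \<open>simp add: comb_def\<close>)
      finally show ?thesis using sub \<open>a \<notin> I\<close> by (simp add: comb_def ee_def)
    qed
  qed
qed


lemma card_pairs_containing:
  assumes "finite I" "k \<in> I"
  shows "card {K \<in> {K. K \<subseteq> I \<and> card K = 2}. k \<in> K} = card I - 1"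
proof -
  have Ik: "I = insert k (I - {k})" using assms by auto
  have "{K \<in> {K. K \<subseteq> I \<and> card K = 2}. k \<in> K} = (\<lambda>i. {k,i}) ` (I - {k})"
  proof (intro equalityI subsetI)
    fix K assume "K \<in> {K \<in> {K. K \<subseteq> I \<and> card K = 2}. k \<in> K}"
    then obtain x y where K: "K = {x,y}" "x \<noteq> y" "K \<subseteq> I" "k \<in> K" by (auto simp: card_2_iff)
    show "K \<in> (\<lambda>i. {k,i}) ` (I - {k})"
    proof (cases "k = x")
      case True
      then show ?thesis using K by auto
    next
      case False
      then have "k = y" using K by auto
      then show ?thesis using K by (auto simp: insert_commute)
    qed
  next
    fix K assume "K \<in> (\<lambda>i. {k,i}) ` (I - {k})"
    then obtain i where "i \<in> I" "i \<noteq> k" "K = {k,i}" by auto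
    then show "K \<in> {K \<in> {K. K \<subseteq> I \<and> card K = 2}. k \<in> K}" using assms by auto
  qed
  also have "card \<dots> = card (I - {k})"
    by (rule card_image) (auto simp: inj_on_def doubleton_eq_iff)
  finally show ?thesis using assms by simp
qed

lemma sum_two:
  assumes "card K = 2"
  shows "(\<Sum>j\<in>K. g (K - {j})) = (\<Sum>k\<in>K. g {k})"
proof -
  obtain x y where K: "K = {x,y}" "x \<noteq> y" using assms by (auto simp: card_2_iff)
  have "{x,y} - {x} = {y}" "{x,y} - {y} = {x}" using K(2) by auto
  then show ?thesis using K by (simp add: add.commute)
qed

lemma KL:
  assumes fin: "finite J" and ev: "even (card J)" and f: "f \<in> MJ J"
  shows "dd J (P_act J f) = ee J f + P_act J (dd J f)"
proof
  fix I
  show "dd J (P_act J f) I = (ee J f + P_act J (dd J f)) I"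
  proof (cases "I \<subseteq> J")
    case False
    have "dd J (P_act J f) I = 0"
      unfolding dd_def
    proof (rule sum.neutral, rule ballI)
      fix i assume "i \<in> J - I"
      then have "\<not> insert i I \<subseteq> J" using False by auto
      then show "P_act J f (insert i I) = 0" by (simp add: P_act_def del: insert_subset)
    qed
    then show ?thesis using False by (simp add: ee_def P_act_def)
  next
    case sub: True
    have finI: "finite I" using sub fin finite_subset by blast
    define X where "X = (\<Sum>k\<in>I. f (I - {k}))"
    define PK where "PK = {K. K \<subseteq> I \<and> card K = 2}"
    have finPK: "finite PK" unfolding PK_def using finite_pairs[OF finI] .
    have L1: "P_act J f (insert i I) = (\<Sum>K\<in>PK. f (insert i (I - K))) + X" if i: "i \<in> J - I" for i
    proof -
      have "P_act J f (insert i I) = (\<Sum>K\<in>{K. K \<subseteq> insert i I \<and> card K = 2}. f (insert i I - K))"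
        using i sub by (simp add: P_act_def)
      also have "\<dots> = (\<Sum>K\<in>PK. f (insert i I - K)) + (\<Sum>k\<in>I. f (insert i I - {i,k}))"
        unfolding PK_def by (rule sum_pairs_insert) (use finI i in auto)
      also have "(\<Sum>K\<in>PK. f (insert i I - K)) = (\<Sum>K\<in>PK. f (insert i (I - K)))"
        by (rule sum.cong[OF refl]) (use i in \<open>auto simp: PK_def intro!: arg_cong[where f=f]\<close>)
      also have "(\<Sum>k\<in>I. f (insert i I - {i,k})) = X"
        unfolding X_def by (rule sum.cong[OF refl]) (use i in \<open>auto intro!: arg_cong[where f=f]\<close>)
      finally show ?thesis .
    qed
    have "dd J (P_act J f) I = (\<Sum>i\<in>J - I. (\<Sum>K\<in>PK. f (insert i (I - K))) + X)"
      unfolding dd_def by (rule sum.cong[OF refl]) (use L1 in auto)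
    also have "\<dots> = (\<Sum>K\<in>PK. \<Sum>i\<in>J - I. f (insert i (I - K))) + of_nat (card (J - I)) * X"
      by (simp add: sum.distrib sum.swap[of _ "J - I"])
    finally have LHS: "dd J (P_act J f) I = (\<Sum>K\<in>PK. \<Sum>i\<in>J - I. f (insert i (I - K))) + of_nat (card (J - I)) * X" .
    have R1: "dd J f (I - K) = (\<Sum>i\<in>J - I. f (insert i (I - K))) + (\<Sum>k\<in>K. f (I - {k}))"
      if K: "K \<in> PK" for K
    proof -
      have KI: "K \<subseteq> I" "card K = 2" using K by (auto simp: PK_def)
      have finK: "finite K" using KI finI finite_subset by blast
      have "J - (I - K) = (J - I) \<union> K" using KI sub by auto
      then have "dd J f (I - K) = (\<Sum>i\<in>(J - I) \<union> K. f (insert i (I - K)))" by (simp add: dd_def)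
      also have "\<dots> = (\<Sum>i\<in>J - I. f (insert i (I - K))) + (\<Sum>i\<in>K. f (insert i (I - K)))"
        by (rule sum.union_disjoint) (use fin finK KI in auto)
      also have "(\<Sum>i\<in>K. f (insert i (I - K))) = (\<Sum>i\<in>K. f (I - (K - {i})))"
        by (rule sum.cong[OF refl]) (use KI in \<open>auto intro!: arg_cong[where f=f]\<close>)
      also have "\<dots> = (\<Sum>k\<in>K. f (I - {k}))"
        by (rule sum_two[OF KI(2), of "\<lambda>S. f (I - S)"])
      finally show ?thesis .
    qed
    have R2: "(\<Sum>K\<in>PK. \<Sum>k\<in>K. f (I - {k})) = of_nat (card I - 1) * X"
    proof -
      have "(\<Sum>K\<in>PK. \<Sum>k\<in>K. f (I - {k})) = (\<Sum>K\<in>PK. \<Sum>k\<in>{k\<in>I. k \<in> K}. f (I - {k}))"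
        by (rule sum.cong[OF refl]) (auto simp: PK_def intro!: sum.cong)
      also have "\<dots> = (\<Sum>k\<in>I. \<Sum>K\<in>{K\<in>PK. k \<in> K}. f (I - {k}))"
        by (rule sum.swap_restrict) (use finPK finI in auto)
      also have "\<dots> = (\<Sum>k\<in>I. of_nat (card I - 1) * f (I - {k}))"
        by (rule sum.cong[OF refl]) (use card_pairs_containing[OF finI] in \<open>simp add: PK_def\<close>)
      finally show ?thesis by (simp add: X_def sum_distrib_left)
    qed
    have "(ee J f + P_act J (dd J f)) I = X + (\<Sum>K\<in>PK. dd J f (I - K))"
      using sub by (simp add: ee_def P_act_def X_def PK_def)
    also have "(\<Sum>K\<in>PK. dd J f (I - K))
       = (\<Sum>K\<in>PK. \<Sum>i\<in>J - I. f (insert i (I - K))) + of_nat (card I - 1) * X"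
      using R1 R2 by (simp add: sum.distrib)
    finally have RHS: "(ee J f + P_act J (dd J f)) I
       = X + ((\<Sum>K\<in>PK. \<Sum>i\<in>J - I. f (insert i (I - K))) + of_nat (card I - 1) * X)" .
    have par: "of_nat (card (J - I)) * X = X + of_nat (card I - 1) * X"
    proof (cases "I = {}")
      case True then show ?thesis by (simp add: X_def)
    next
      case False
      then have "card I \<ge> 1" using finI by (simp add: Suc_le_eq card_gt_0_iff)
      moreover have "card (J - I) = card J - card I" using sub finI by (simp add: card_Diff_subset)
      moreover have "card I \<le> card J" using sub fin by (simp add: card_mono)
      ultimately have "of_nat (card (J - I)) = (1::bit) + of_nat (card I - 1)"
        using ev by (auto simp: of_nat_bit)
      then show ?thesis by (simp add: distrib_right)
    qed
    show ?thesis using LHS RHS par by (simp add: add_ac)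
  qed
qed

lemma PP_zero:
  assumes fin: "finite J"
  shows "P_act J (P_act J f) = 0"
proof
  fix I
  show "P_act J (P_act J f) I = 0 I"
  proof (cases "I \<subseteq> J \<and> finite I")
    case False
    then have "\<not> I \<subseteq> J" using fin finite_subset by blast
    then show ?thesis by (simp add: P_act_def)
  next
    case True
    then have sub: "I \<subseteq> J" and finI: "finite I" by auto
    define PK where "PK = {K. K \<subseteq> I \<and> card K = 2}"
    have finPK: "finite PK" unfolding PK_def using finite_pairs[OF finI] .
    define h where "h K L = (if K \<inter> L = {} then f (I - (K \<union> L)) else 0)" for K L
    have inner: "P_act J f (I - K) = (\<Sum>L\<in>PK. h K L)" if K: "K \<in> PK" for K
    proof -
      have "{L. L \<subseteq> I - K \<and> card L = 2} = {L \<in> PK. K \<inter> L = {}}" by (auto simp: PK_def)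
      then have "P_act J f (I - K) = (\<Sum>L\<in>{L \<in> PK. K \<inter> L = {}}. f (I - K - L))"
        using sub by (simp add: P_act_def Diff_subset order_trans[OF Diff_subset sub])
      also have "\<dots> = (\<Sum>L\<in>PK. h K L)"
        unfolding h_def
      proof (subst sum.inter_filter[OF finPK], rule sum.cong[OF refl])
        fix L show "(if K \<inter> L = {} then f (I - K - L) else 0) = (if K \<inter> L = {} then f (I - (K \<union> L)) else 0)"
          by (simp add: Diff_eq Int_assoc)
      qed
      finally show ?thesis .
    qed
    have "P_act J (P_act J f) I = (\<Sum>K\<in>PK. \<Sum>L\<in>PK. h K L)"
      using sub inner by (simp add: P_act_def PK_def[symmetric] cong: sum.cong)
    also have "\<dots> = (\<Sum>K\<in>PK. h K K)"
      by (rule sym_double_sum[OF finPK]) (simp add: h_def Int_commute Un_commute)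
    also have "\<dots> = 0"
    proof (rule sum.neutral, rule ballI)
      fix K assume "K \<in> PK"
      then have "K \<noteq> {}" by (auto simp: PK_def)
      then show "h K K = 0" by (simp add: h_def)
    qed
    finally show ?thesis by simp
  qed
qed


definition Rs :: "nat set \<Rightarrow> nat \<Rightarrow> nat \<Rightarrow> (nat set \<Rightarrow> bit) set" where
  "Rs J k l = {f \<in> MJ J. \<forall>I. f I \<noteq> 0 \<longrightarrow> card (J - I) + k = l}"
definition Ks :: "nat set \<Rightarrow> nat \<Rightarrow> nat \<Rightarrow> (nat set \<Rightarrow> bit) set" where
  "Ks J k l = {f \<in> Rs J k l. P_act J f = 0}"
definition Is :: "nat set \<Rightarrow> nat \<Rightarrow> nat \<Rightarrow> (nat set \<Rightarrow> bit) set" where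
  "Is J k l = {P_act J w | w. w \<in> MJ J} \<inter> Rs J k l"

lemma add_add_cancel [simp]: "(x::'a \<Rightarrow> bit) + y + y = x"
  by (simp add: add.assoc)

lemma Rs_MJ: "f \<in> Rs J k l \<Longrightarrow> f \<in> MJ J"
  by (simp add: Rs_def)
lemma Rs_zero [simp]: "0 \<in> Rs J k l"
  by (simp add: Rs_def)
lemma Rs_add: assumes "f \<in> Rs J k l" "g \<in> Rs J k l" shows "f + g \<in> Rs J k l"
proof -
  have "\<And>I. (f + g) I \<noteq> 0 \<Longrightarrow> f I \<noteq> 0 \<or> g I \<noteq> 0" by auto
  then show ?thesis using assms MJ_add unfolding Rs_def by blast
qed

lemma Rs_dd:
  assumes fin: "finite J" and f: "f \<in> Rs J (Suc k) l"
  shows "dd J f \<in> Rs J k l"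
  unfolding Rs_def
proof (intro CollectI conjI allI impI)
  show "dd J f \<in> MJ J" using f MJ_dd Rs_MJ by blast
  fix I assume "dd J f I \<noteq> 0"
  then have "(\<Sum>i\<in>J - I. f (insert i I)) \<noteq> 0" by (simp add: dd_def)
  then obtain i where i: "i \<in> J - I" "f (insert i I) \<noteq> 0"
    by (rule sum.not_neutral_contains_not_neutral)
  then have "card (J - insert i I) + Suc k = l" using f unfolding Rs_def by blast
  moreover have "card (J - I) = Suc (card (J - insert i I))"
  proof -
    have e: "J - I = insert i (J - insert i I)" using i by auto
    show ?thesis by (subst e, rule card_insert_disjoint) (use fin in auto)
  qed
  ultimately show "card (J - I) + k = l" by linarith
qed

lemma Rs_P:
  assumes fin: "finite J" and f: "f \<in> Rs J k l"
  shows "P_act J f \<in> Rs J (Suc (Suc k)) l"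
  unfolding Rs_def
proof (intro CollectI conjI allI impI)
  show "P_act J f \<in> MJ J" by (rule MJ_P)
  fix I assume nz: "P_act J f I \<noteq> 0"
  then have sub: "I \<subseteq> J" by (auto simp: P_act_def split: if_splits)
  have "(\<Sum>K\<in>{K. K \<subseteq> I \<and> card K = 2}. f (I - K)) \<noteq> 0" using nz sub by (simp add: P_act_def)
  then obtain K where K0: "K \<in> {K. K \<subseteq> I \<and> card K = 2}" "f (I - K) \<noteq> 0"
    by (rule sum.not_neutral_contains_not_neutral)
  then have K: "K \<subseteq> I" "card K = 2" "f (I - K) \<noteq> 0" by auto
  then have "card (J - (I - K)) + k = l" using f unfolding Rs_def by blast
  moreover have "J - (I - K) = (J - I) \<union> K" using K sub by auto
  moreover have "finite K" using K(2) card.infinite by fastforce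
  moreover have "card ((J - I) \<union> K) = card (J - I) + card K"
    by (rule card_Un_disjoint) (use fin \<open>finite K\<close> K in auto)
  ultimately show "card (J - I) + Suc (Suc k) = l" using K(2) by simp
qed

lemma Rs_comb:
  assumes fin: "finite J" and a: "a \<notin> J" and p: "p \<in> MJ J" and q: "q \<in> MJ J"
  shows "comb a p q \<in> Rs (insert a J) k l \<longleftrightarrow> p \<in> Rs J (Suc k) l \<and> q \<in> Rs J k l"
proof -
  have c1: "card (insert a J - I) = Suc (card (J - I))" if "a \<notin> I" for I
  proof -
    have "insert a J - I = insert a (J - I)" using that by auto
    then show ?thesis using fin a by simp
  qed
  have c2: "insert a J - I = J - (I - {a})" if "a \<in> I" for I
    using that a by auto
  have mj: "comb a p q \<in> MJ (insert a J)" using MJ_comb p q .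
  show ?thesis
  proof
    assume H: "comb a p q \<in> Rs (insert a J) k l"
    have "p \<in> Rs J (Suc k) l" unfolding Rs_def
    proof (intro CollectI conjI allI impI)
      show "p \<in> MJ J" by fact
      fix I assume "p I \<noteq> 0"
      then have "I \<subseteq> J" using p MJ_zero_outside by blast
      then have "a \<notin> I" using a by auto
      then have "comb a p q I \<noteq> 0" using \<open>p I \<noteq> 0\<close> by (simp add: comb_def)
      then have "card (insert a J - I) + k = l" using H unfolding Rs_def by blast
      then show "card (J - I) + Suc k = l" using c1[OF \<open>a \<notin> I\<close>] by simp
    qed
    moreover have "q \<in> Rs J k l" unfolding Rs_def
    proof (intro CollectI conjI allI impI)
      show "q \<in> MJ J" by fact
      fix I assume "q I \<noteq> 0"
      then have "I \<subseteq> J" using q MJ_zero_outside by blast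
      then have "a \<notin> I" using a by auto
      then have "insert a I - {a} = I" by auto
      then have "comb a p q (insert a I) \<noteq> 0" using \<open>q I \<noteq> 0\<close> by (simp add: comb_def)
      then have "card (insert a J - insert a I) + k = l" using H unfolding Rs_def by blast
      moreover have "insert a J - insert a I = J - I" using \<open>a \<notin> I\<close> a by auto
      ultimately show "card (J - I) + k = l" by simp
    qed
    ultimately show "p \<in> Rs J (Suc k) l \<and> q \<in> Rs J k l" ..
  next
    assume H: "p \<in> Rs J (Suc k) l \<and> q \<in> Rs J k l"
    show "comb a p q \<in> Rs (insert a J) k l" unfolding Rs_def
    proof (intro CollectI conjI allI impI)
      show "comb a p q \<in> MJ (insert a J)" by (fact mj)
      fix I assume nz: "comb a p q I \<noteq> 0"
      show "card (insert a J - I) + k = l"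
      proof (cases "a \<in> I")
        case True
        then have "q (I - {a}) \<noteq> 0" using nz by (simp add: comb_def)
        then have "card (J - (I - {a})) + k = l" using H unfolding Rs_def by blast
        then show ?thesis using c2[OF True] by simp
      next
        case False
        then have "p I \<noteq> 0" using nz by (simp add: comb_def)
        then have "card (J - I) + Suc k = l" using H unfolding Rs_def by blast
        then show ?thesis using c1[OF False] by simp
      qed
    qed
  qed
qed

lemma Rs_big: assumes "l < k" shows "Rs J k l = {0}"
proof (intro equalityI subsetI)
  fix f assume f: "f \<in> Rs J k l"
  have "f I = 0" for I
  proof (rule ccontr)
    assume "f I \<noteq> 0"
    then have "card (J - I) + k = l" using f unfolding Rs_def by blast
    then show False using assms by linarith
  qed
  then show "f \<in> {0}" by (simp add: fun_eq_iff)
qed simp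

lemma Rs_shift: "k \<le> l \<Longrightarrow> Rs J k l = Rs J 0 (l - k)"
  by (auto simp: Rs_def)

lemma Ks_big: "Ks J k l = {0}" if "l < k"
  unfolding Ks_def Rs_big[OF that] by auto
lemma Is_big: "Is J k l = {0}" if "l < k"
proof -
  have "0 \<in> {P_act J w |w. w \<in> MJ J}" by (rule CollectI, rule exI[of _ 0]) simp
  then show ?thesis unfolding Is_def Rs_big[OF that] by blast
qed
lemma Ks_shift: "Ks J k l = Ks J 0 (l - k)" if "k \<le> l"
  unfolding Ks_def Rs_shift[OF that] ..
lemma Is_shift: "Is J k l = Is J 0 (l - k)" if "k \<le> l"
  unfolding Is_def Rs_shift[OF that] ..


definition G2 :: "nat set \<Rightarrow> nat \<Rightarrow> (nat set \<Rightarrow> bit) \<Rightarrow> (nat set \<Rightarrow> bit) \<Rightarrow> nat set \<Rightarrow> bit" where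
  "G2 J a p q = comb a p (q + dd J p)"

lemma G2_MJ: "p \<in> MJ J \<Longrightarrow> q \<in> MJ J \<Longrightarrow> G2 J a p q \<in> MJ (insert a J)"
  unfolding G2_def by (intro MJ_comb MJ_add MJ_dd)

lemma G2_inj:
  assumes "a \<notin> J" "p \<in> MJ J" "q \<in> MJ J" "p' \<in> MJ J" "q' \<in> MJ J"
    and "G2 J a p q = G2 J a p' q'"
  shows "p = p' \<and> q = q'"
proof -
  have "p = p' \<and> q + dd J p = q' + dd J p'"
    using assms unfolding G2_def by (intro comb_inj) (auto intro: MJ_add MJ_dd)
  then show ?thesis by (metis add_right_cancel)
qed

lemma G2_surj:
  assumes "a \<notin> J" "v \<in> MJ (insert a J)"
  obtains p q where "p \<in> MJ J" "q \<in> MJ J" "v = G2 J a p q"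
proof -
  obtain p q0 where pq: "p \<in> MJ J" "q0 \<in> MJ J" "v = comb a p q0"
    using comb_surj[OF assms] by blast
  have "v = G2 J a p (q0 + dd J p)" using pq by (simp add: G2_def)
  moreover have "q0 + dd J p \<in> MJ J" using pq by (intro MJ_add MJ_dd)
  ultimately show ?thesis using that pq by blast
qed

lemma G2_P:
  assumes "finite J" "a \<notin> J" "even (card J)" "p \<in> MJ J" "q \<in> MJ J"
  shows "P_act (insert a J) (G2 J a p q) = G2 J a (P_act J p) (P_act J q)"
proof -
  have "P_act (insert a J) (G2 J a p q) = comb a (P_act J p) (P_act J q + P_act J (dd J p) + ee J p)"
    unfolding G2_def P_comb[OF assms(1,2)] P_add ..
  also have "P_act J q + P_act J (dd J p) + ee J p = P_act J q + dd J (P_act J p)"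
    using KL[OF assms(1,3,4)] by (simp add: add_ac)
  finally show ?thesis unfolding G2_def .
qed

lemma G2_Rs:
  assumes "finite J" "a \<notin> J" "p \<in> MJ J" "q \<in> MJ J"
  shows "G2 J a p q \<in> Rs (insert a J) 0 l \<longleftrightarrow> p \<in> Rs J 1 l \<and> q \<in> Rs J 0 l"
proof -
  have "G2 J a p q \<in> Rs (insert a J) 0 l \<longleftrightarrow> p \<in> Rs J (Suc 0) l \<and> q + dd J p \<in> Rs J 0 l"
    unfolding G2_def using assms by (intro Rs_comb) (auto intro: MJ_add MJ_dd)
  also have "\<dots> \<longleftrightarrow> p \<in> Rs J 1 l \<and> q \<in> Rs J 0 l"
  proof
    assume H: "p \<in> Rs J (Suc 0) l \<and> q + dd J p \<in> Rs J 0 l"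
    then have "dd J p \<in> Rs J 0 l" using Rs_dd assms(1) by blast
    then have "q + dd J p + dd J p \<in> Rs J 0 l" using H Rs_add by blast
    then show "p \<in> Rs J 1 l \<and> q \<in> Rs J 0 l" using H by simp
  next
    assume H: "p \<in> Rs J 1 l \<and> q \<in> Rs J 0 l"
    then have "dd J p \<in> Rs J 0 l" using Rs_dd assms(1) by (metis One_nat_def)
    then show "p \<in> Rs J (Suc 0) l \<and> q + dd J p \<in> Rs J 0 l" using H Rs_add by simp
  qed
  finally show ?thesis .
qed

lemma G2_zero [simp]: "G2 J a 0 0 = 0"
  by (simp add: G2_def)

lemma odd_step:
  assumes fin: "finite J" and a: "a \<notin> J" and ev: "even (card J)"
  shows "card (Ks (insert a J) 0 l) = card (Ks J 1 l) * card (Ks J 0 l)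
       \<and> card (Is (insert a J) 0 l) = card (Is J 1 l) * card (Is J 0 l)"
proof -
  let ?g = "\<lambda>(p,q). G2 J a p q"
  have inj: "inj_on ?g (MJ J \<times> MJ J)"
    by (rule inj_onI) (use G2_inj[OF a] in auto)
  have KsMJ: "Ks J k l \<subseteq> MJ J" for k by (auto simp: Ks_def Rs_def)
  have IsMJ: "Is J k l \<subseteq> MJ J" for k by (auto simp: Is_def Rs_def)
  have K: "Ks (insert a J) 0 l = ?g ` (Ks J 1 l \<times> Ks J 0 l)"
  proof (intro equalityI subsetI)
    fix v assume v: "v \<in> Ks (insert a J) 0 l"
    then have "v \<in> MJ (insert a J)" by (simp add: Ks_def Rs_def)
    then obtain p q where pq: "p \<in> MJ J" "q \<in> MJ J" "v = G2 J a p q" using G2_surj[OF a] by blast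
    have R: "p \<in> Rs J 1 l" "q \<in> Rs J 0 l" using v pq G2_Rs[OF fin a pq(1,2)] by (auto simp: Ks_def)
    have "G2 J a (P_act J p) (P_act J q) = G2 J a 0 0"
      using v pq G2_P[OF fin a ev pq(1,2)] by (simp add: Ks_def)
    then have "P_act J p = 0 \<and> P_act J q = 0"
      by (rule G2_inj[OF a MJ_P MJ_P MJ_zero MJ_zero])
    then have "(p,q) \<in> Ks J 1 l \<times> Ks J 0 l" using R by (simp add: Ks_def)
    then show "v \<in> ?g ` (Ks J 1 l \<times> Ks J 0 l)" using pq by force
  next
    fix v assume "v \<in> ?g ` (Ks J 1 l \<times> Ks J 0 l)"
    then obtain p q where pq: "p \<in> Ks J 1 l" "q \<in> Ks J 0 l" "v = G2 J a p q" by auto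
    have m: "p \<in> MJ J" "q \<in> MJ J" using pq KsMJ by blast+
    have "v \<in> Rs (insert a J) 0 l" using pq G2_Rs[OF fin a m] by (simp add: Ks_def)
    moreover have "P_act (insert a J) v = 0"
      using pq G2_P[OF fin a ev m] by (simp add: Ks_def)
    ultimately show "v \<in> Ks (insert a J) 0 l" by (simp add: Ks_def)
  qed
  have I: "Is (insert a J) 0 l = ?g ` (Is J 1 l \<times> Is J 0 l)"
  proof (intro equalityI subsetI)
    fix v assume v: "v \<in> Is (insert a J) 0 l"
    then obtain w where w: "w \<in> MJ (insert a J)" "v = P_act (insert a J) w" "v \<in> Rs (insert a J) 0 l"
      by (auto simp: Is_def)
    then obtain p q where pq: "p \<in> MJ J" "q \<in> MJ J" "w = G2 J a p q" using G2_surj[OF a] by blast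
    have v2: "v = G2 J a (P_act J p) (P_act J q)" using w pq G2_P[OF fin a ev pq(1,2)] by simp
    have R: "P_act J p \<in> Rs J 1 l" "P_act J q \<in> Rs J 0 l"
      using w(3) unfolding v2 G2_Rs[OF fin a MJ_P MJ_P] by auto
    have "(P_act J p, P_act J q) \<in> Is J 1 l \<times> Is J 0 l" using R pq by (auto simp: Is_def)
    then show "v \<in> ?g ` (Is J 1 l \<times> Is J 0 l)" using v2 by force
  next
    fix v assume "v \<in> ?g ` (Is J 1 l \<times> Is J 0 l)"
    then obtain x y where xy: "x \<in> Is J 1 l" "y \<in> Is J 0 l" "v = G2 J a x y" by auto
    obtain p where p: "p \<in> MJ J" "x = P_act J p" using xy(1) by (auto simp: Is_def)
    obtain q where q: "q \<in> MJ J" "y = P_act J q" using xy(2) by (auto simp: Is_def)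
    have "v = P_act (insert a J) (G2 J a p q)" using xy p q G2_P[OF fin a ev p(1) q(1)] by simp
    moreover have "G2 J a p q \<in> MJ (insert a J)" using p q G2_MJ by blast
    moreover have "v \<in> Rs (insert a J) 0 l"
      using xy G2_Rs[OF fin a, of x y] IsMJ by (auto simp: Is_def)
    ultimately show "v \<in> Is (insert a J) 0 l" unfolding Is_def by blast
  qed
  have "card (Ks (insert a J) 0 l) = card (Ks J 1 l \<times> Ks J 0 l)"
    unfolding K by (rule card_image, rule inj_on_subset[OF inj]) (use KsMJ in blast)
  moreover have "card (Is (insert a J) 0 l) = card (Is J 1 l \<times> Is J 0 l)"
    unfolding I by (rule card_image, rule inj_on_subset[OF inj]) (use IsMJ in blast)
  ultimately show ?thesis by (simp add: card_cartesian_product)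
qed


definition G4 :: "nat set \<Rightarrow> nat \<Rightarrow> nat \<Rightarrow> (nat set \<Rightarrow> bit) \<Rightarrow> (nat set \<Rightarrow> bit) \<Rightarrow> (nat set \<Rightarrow> bit) \<Rightarrow> (nat set \<Rightarrow> bit) \<Rightarrow> nat set \<Rightarrow> bit" where
  "G4 J a b p q r s = comb b (comb a p (q + dd J p)) (comb a (r + dd J p) (s + dd J q + dd J r))"

lemma add_self_left [simp]: "(x::'a \<Rightarrow> bit) + (x + y) = y"
  by (simp add: add.assoc[symmetric])

lemma numeral_even_fun_bit [simp]: "(numeral (Num.Bit0 n) :: 'a \<Rightarrow> bit) = 0"
  by (simp add: fun_eq_iff)

lemma add_eq_zero_bit: "(x::'a \<Rightarrow> bit) + y = 0 \<Longrightarrow> y = x"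
  by (metis add_self_left add.right_neutral)

lemma Rs_add_iff: "y \<in> Rs J k l \<Longrightarrow> x + y \<in> Rs J k l \<longleftrightarrow> x \<in> Rs J k l"
  by (metis Rs_add add_add_cancel)

locale two_pts =
  fixes J :: "nat set" and a b :: nat
  assumes fin: "finite J" and a: "a \<notin> J" and b: "b \<notin> J" and ab: "a \<noteq> b"
begin

lemma finA: "finite (insert a J)" using fin by simp
lemma bA: "b \<notin> insert a J" using b ab by simp

lemma G4_MJ: "p \<in> MJ J \<Longrightarrow> q \<in> MJ J \<Longrightarrow> r \<in> MJ J \<Longrightarrow> s \<in> MJ J \<Longrightarrow> G4 J a b p q r s \<in> MJ (insert b (insert a J))"
  unfolding G4_def by (intro MJ_comb MJ_add MJ_dd)

lemma G4_inj:
  assumes m: "p \<in> MJ J" "q \<in> MJ J" "r \<in> MJ J" "s \<in> MJ J"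
    "p' \<in> MJ J" "q' \<in> MJ J" "r' \<in> MJ J" "s' \<in> MJ J"
    and eq: "G4 J a b p q r s = G4 J a b p' q' r' s'"
  shows "p = p' \<and> q = q' \<and> r = r' \<and> s = s'"
proof -
  have m2: "x \<in> MJ J \<Longrightarrow> y \<in> MJ J \<Longrightarrow> x + dd J y \<in> MJ J" for x y by (intro MJ_add MJ_dd)
  have m3: "x \<in> MJ J \<Longrightarrow> y \<in> MJ J \<Longrightarrow> z \<in> MJ J \<Longrightarrow> x + dd J y + dd J z \<in> MJ J" for x y z
    by (intro MJ_add MJ_dd)
  have "comb a p (q + dd J p) = comb a p' (q' + dd J p') \<and>
        comb a (r + dd J p) (s + dd J q + dd J r) = comb a (r' + dd J p') (s' + dd J q' + dd J r')"
    using eq unfolding G4_def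
    by (intro comb_inj[OF bA] MJ_comb m2 m3 m)
  then have e1: "comb a p (q + dd J p) = comb a p' (q' + dd J p')"
    and e2: "comb a (r + dd J p) (s + dd J q + dd J r) = comb a (r' + dd J p') (s' + dd J q' + dd J r')"
    by auto
  have h1: "p = p' \<and> q + dd J p = q' + dd J p'"
    by (rule comb_inj[OF a m(1) m2[OF m(2) m(1)] m(5) m2[OF m(6) m(5)] e1])
  have h2: "r + dd J p = r' + dd J p' \<and> s + dd J q + dd J r = s' + dd J q' + dd J r'"
    by (rule comb_inj[OF a m2[OF m(3) m(1)] m3[OF m(4) m(2) m(3)] m2[OF m(7) m(5)] m3[OF m(8) m(6) m(7)] e2])
  from h1 have pp: "p = p'" and qq: "q = q'" by (auto dest: add_right_cancel[THEN iffD1])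
  from h2 pp have rr: "r = r'" by (auto dest: add_right_cancel[THEN iffD1])
  from h2 qq rr have ss: "s = s'" by (auto dest: add_right_cancel[THEN iffD1])
  show ?thesis using pp qq rr ss by simp
qed


lemma G4_surj:
  assumes v: "v \<in> MJ (insert b (insert a J))"
  obtains p q r s where "p \<in> MJ J" "q \<in> MJ J" "r \<in> MJ J" "s \<in> MJ J" "v = G4 J a b p q r s"
proof -
  obtain X Y where XY: "X \<in> MJ (insert a J)" "Y \<in> MJ (insert a J)" "v = comb b X Y"
    using comb_surj[OF bA v] by blast
  obtain p q0 where X: "p \<in> MJ J" "q0 \<in> MJ J" "X = comb a p q0" using comb_surj[OF a XY(1)] by blast
  obtain r0 s0 where Y: "r0 \<in> MJ J" "s0 \<in> MJ J" "Y = comb a r0 s0" using comb_surj[OF a XY(2)] by blast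
  define q where "q = q0 + dd J p"
  define r where "r = r0 + dd J p"
  define s where "s = s0 + dd J q + dd J r"
  have m: "q \<in> MJ J" "r \<in> MJ J" "s \<in> MJ J"
    unfolding q_def r_def s_def using X Y by (auto intro!: MJ_add MJ_dd)
  have e1: "q + dd J p = q0" "r + dd J p = r0" by (simp_all add: q_def r_def)
  have e2: "s + dd J q + dd J r = s0" by (simp add: s_def add_ac)
  have "v = G4 J a b p q r s"
    unfolding G4_def XY(3) X(3) Y(3) e1 e2 ..
  then show ?thesis using that X(1) m by blast
qed

lemma G4_zero [simp]: "G4 J a b 0 0 0 0 = 0"
  by (simp add: G4_def)

lemma G4_P:
  assumes ev: "even (card J)" and m: "p \<in> MJ J" "q \<in> MJ J" "r \<in> MJ J" "s \<in> MJ J"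
  shows "P_act (insert b (insert a J)) (G4 J a b p q r s)
       = G4 J a b (P_act J p) (P_act J q) (P_act J r) (P_act J s + p)"
proof -
  let ?P = "P_act J" and ?d = "dd J" and ?e = "ee J"
  have mq: "q + ?d p \<in> MJ J" and mr: "r + ?d p \<in> MJ J" using m by (auto intro!: MJ_add MJ_dd)
  have KLp: "?d (?P p) = ?e p + ?P (?d p)" by (rule KL[OF fin ev m(1)])
  have KLq: "?d (?P q) = ?e q + ?P (?d q)" by (rule KL[OF fin ev m(2)])
  have KLr: "?d (?P r) = ?e r + ?P (?d r)" by (rule KL[OF fin ev m(3)])
  have "P_act (insert b (insert a J)) (G4 J a b p q r s)
      = comb b (P_act (insert a J) (comb a p (q + ?d p)))
               (P_act (insert a J) (comb a (r + ?d p) (s + ?d q + ?d r)) + ee (insert a J) (comb a p (q + ?d p)))"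
    unfolding G4_def by (rule P_comb[OF finA bA])
  also have "\<dots> = comb b (comb a (?P p) (?P (q + ?d p) + ?e p))
       (comb a (?P (r + ?d p)) (?P (s + ?d q + ?d r) + ?e (r + ?d p)) + comb a (?e p) (?e (q + ?d p) + p))"
    unfolding P_comb[OF fin a] ee_comb[OF fin a m(1)] ..
  also have "\<dots> = comb b (comb a (?P p) (?P (q + ?d p) + ?e p))
       (comb a (?P (r + ?d p) + ?e p) (?P (s + ?d q + ?d r) + ?e (r + ?d p) + (?e (q + ?d p) + p)))"
    unfolding comb_add ..
  also have "\<dots> = G4 J a b (?P p) (?P q) (?P r) (?P s + p)"
  proof -
    have 1: "?P (q + ?d p) + ?e p = ?P q + ?d (?P p)"
      unfolding P_add KLp by (simp add: add_ac)
    have 2: "?P (r + ?d p) + ?e p = ?P r + ?d (?P p)"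
      unfolding P_add KLp by (simp add: add_ac)
    have 3: "?P (s + ?d q + ?d r) + ?e (r + ?d p) + (?e (q + ?d p) + p)
           = ?P s + p + ?d (?P q) + ?d (?P r)"
      unfolding P_add ee_add KLq KLr by (simp add: add_ac)
    show ?thesis unfolding G4_def 1 2 3 ..
  qed
  finally show ?thesis .
qed

lemma G4_Rs:
  assumes m: "p \<in> MJ J" "q \<in> MJ J" "r \<in> MJ J" "s \<in> MJ J"
  shows "G4 J a b p q r s \<in> Rs (insert b (insert a J)) 0 l \<longleftrightarrow>
     p \<in> Rs J (Suc (Suc 0)) l \<and> q \<in> Rs J (Suc 0) l \<and> r \<in> Rs J (Suc 0) l \<and> s \<in> Rs J 0 l"
proof -
  let ?d = "dd J"
  have mq: "q + ?d p \<in> MJ J" and mr: "r + ?d p \<in> MJ J" and ms: "s + ?d q + ?d r \<in> MJ J"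
    using m by (auto intro!: MJ_add MJ_dd)
  have "G4 J a b p q r s \<in> Rs (insert b (insert a J)) 0 l \<longleftrightarrow>
     comb a p (q + ?d p) \<in> Rs (insert a J) (Suc 0) l \<and> comb a (r + ?d p) (s + ?d q + ?d r) \<in> Rs (insert a J) 0 l"
    unfolding G4_def by (rule Rs_comb[OF finA bA]) (use m mq mr ms in \<open>auto intro: MJ_comb\<close>)
  also have "\<dots> \<longleftrightarrow> (p \<in> Rs J (Suc (Suc 0)) l \<and> q + ?d p \<in> Rs J (Suc 0) l) \<and>
       (r + ?d p \<in> Rs J (Suc 0) l \<and> s + ?d q + ?d r \<in> Rs J 0 l)"
    using Rs_comb[OF fin a m(1) mq] Rs_comb[OF fin a mr ms] by simp
  also have "\<dots> \<longleftrightarrow> p \<in> Rs J (Suc (Suc 0)) l \<and> q \<in> Rs J (Suc 0) l \<and> r \<in> Rs J (Suc 0) l \<and> s \<in> Rs J 0 l"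
  proof (cases "p \<in> Rs J (Suc (Suc 0)) l")
    case True
    then have dp: "?d p \<in> Rs J (Suc 0) l" by (rule Rs_dd[OF fin])
    show ?thesis
    proof (cases "q \<in> Rs J (Suc 0) l \<and> r \<in> Rs J (Suc 0) l")
      case True
      then have "?d q + ?d r \<in> Rs J 0 l" by (intro Rs_add Rs_dd[OF fin]) auto
      then have "s + ?d q + ?d r \<in> Rs J 0 l \<longleftrightarrow> s \<in> Rs J 0 l"
        using Rs_add_iff[of "?d q + ?d r"] by (simp add: add.assoc)
      then show ?thesis using True dp Rs_add_iff[OF dp] by simp
    next
      case False
      then show ?thesis using dp Rs_add_iff[OF dp] by auto
    qed
  next
    case False
    then show ?thesis by simp
  qed
  finally show ?thesis .
qed


lemma even_step:
  assumes ev: "even (card J)"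
  shows "card (Ks (insert b (insert a J)) 0 l) = card (Ks J (Suc 0) l) * card (Ks J (Suc 0) l) * card (Rs J 0 l)
       \<and> card (Is (insert b (insert a J)) 0 l) = card (Is J (Suc 0) l) * card (Is J (Suc 0) l) * card (Rs J 0 l)"
proof -
  let ?JJ = "insert b (insert a J)"
  let ?P = "P_act J"
  have KsMJ: "Ks J k l \<subseteq> MJ J" for k by (auto simp: Ks_def Rs_def)
  have IsMJ: "Is J k l \<subseteq> MJ J" for k by (auto simp: Is_def Rs_def)
  have RsMJ: "Rs J k l \<subseteq> MJ J" for k by (auto simp: Rs_def)
  let ?g = "\<lambda>(q,r,s). G4 J a b (?P s) q r s"
  have inj: "inj_on ?g (MJ J \<times> MJ J \<times> MJ J)"
  proof (rule inj_onI)
    fix x y assume x: "x \<in> MJ J \<times> MJ J \<times> MJ J" and y: "y \<in> MJ J \<times> MJ J \<times> MJ J"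
      and e0: "?g x = ?g y"
    obtain q r s where xx: "x = (q,r,s)" by (cases x) auto
    obtain q' r' s' where yy: "y = (q',r',s')" by (cases y) auto
    have m: "q \<in> MJ J" "r \<in> MJ J" "s \<in> MJ J" "q' \<in> MJ J" "r' \<in> MJ J" "s' \<in> MJ J"
      using x y xx yy by auto
    have e: "G4 J a b (?P s) q r s = G4 J a b (?P s') q' r' s'" using e0 xx yy by simp
    show "x = y"
      using G4_inj[OF MJ_P m(1-3) MJ_P m(4-6) e] xx yy by simp
  qed
  have K: "Ks ?JJ 0 l = ?g ` (Ks J (Suc 0) l \<times> Ks J (Suc 0) l \<times> Rs J 0 l)"
  proof (intro equalityI subsetI)
    fix v assume v: "v \<in> Ks ?JJ 0 l"
    then have "v \<in> MJ ?JJ" by (simp add: Ks_def Rs_def)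
    then obtain p q r s where m: "p \<in> MJ J" "q \<in> MJ J" "r \<in> MJ J" "s \<in> MJ J"
      and vv: "v = G4 J a b p q r s" using G4_surj by blast
    have R: "p \<in> Rs J (Suc (Suc 0)) l" "q \<in> Rs J (Suc 0) l" "r \<in> Rs J (Suc 0) l" "s \<in> Rs J 0 l"
      using v G4_Rs[OF m] vv by (auto simp: Ks_def)
    have "G4 J a b (?P p) (?P q) (?P r) (?P s + p) = G4 J a b 0 0 0 0"
      using v vv G4_P[OF ev m] by (simp add: Ks_def)
    then have z: "?P p = 0 \<and> ?P q = 0 \<and> ?P r = 0 \<and> ?P s + p = 0"
      by (rule G4_inj[OF MJ_P MJ_P MJ_P MJ_add[OF MJ_P m(1)] MJ_zero MJ_zero MJ_zero MJ_zero])
    then have "p = ?P s" using add_eq_zero_bit by blast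
    then have "v = ?g (q, r, s)" using vv by simp
    moreover have "(q, r, s) \<in> Ks J (Suc 0) l \<times> Ks J (Suc 0) l \<times> Rs J 0 l"
      using R z by (simp add: Ks_def)
    ultimately show "v \<in> ?g ` (Ks J (Suc 0) l \<times> Ks J (Suc 0) l \<times> Rs J 0 l)" by blast
  next
    fix v assume "v \<in> ?g ` (Ks J (Suc 0) l \<times> Ks J (Suc 0) l \<times> Rs J 0 l)"
    then obtain q r s where qrs: "q \<in> Ks J (Suc 0) l" "r \<in> Ks J (Suc 0) l" "s \<in> Rs J 0 l"
      and vv: "v = G4 J a b (?P s) q r s" by auto
    have m: "q \<in> MJ J" "r \<in> MJ J" "s \<in> MJ J" using qrs KsMJ RsMJ by blast+
    have "?P s \<in> Rs J (Suc (Suc 0)) l" by (rule Rs_P[OF fin qrs(3)])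
    then have "v \<in> Rs ?JJ 0 l" using vv qrs G4_Rs[OF MJ_P m] by (simp add: Ks_def)
    moreover have "P_act ?JJ v = 0"
      using vv qrs G4_P[OF ev MJ_P m] PP_zero[OF fin] by (simp add: Ks_def)
    ultimately show "v \<in> Ks ?JJ 0 l" by (simp add: Ks_def)
  qed
  have I: "Is ?JJ 0 l = ?g ` (Is J (Suc 0) l \<times> Is J (Suc 0) l \<times> Rs J 0 l)"
  proof (intro equalityI subsetI)
    fix v assume v: "v \<in> Is ?JJ 0 l"
    then obtain w where w: "w \<in> MJ ?JJ" "v = P_act ?JJ w" "v \<in> Rs ?JJ 0 l"
      by (auto simp: Is_def)
    then obtain p q r s where m: "p \<in> MJ J" "q \<in> MJ J" "r \<in> MJ J" "s \<in> MJ J"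
      and ww: "w = G4 J a b p q r s" using G4_surj by blast
    define t where "t = ?P s + p"
    have mt: "t \<in> MJ J" unfolding t_def using m by (intro MJ_add MJ_P)
    have Pt: "?P t = ?P p" unfolding t_def P_add PP_zero[OF fin] by simp
    have v1: "v = G4 J a b (?P p) (?P q) (?P r) (?P s + p)"
      unfolding w(2) ww by (rule G4_P[OF ev m])
    have vv: "v = G4 J a b (?P t) (?P q) (?P r) t" unfolding Pt unfolding t_def by (rule v1)
    have "G4 J a b (?P t) (?P q) (?P r) t \<in> Rs ?JJ 0 l" using w(3) vv by simp
    then have R: "?P q \<in> Rs J (Suc 0) l" "?P r \<in> Rs J (Suc 0) l" "t \<in> Rs J 0 l"
      unfolding G4_Rs[OF MJ_P MJ_P MJ_P mt] by auto
    have "(?P q, ?P r, t) \<in> Is J (Suc 0) l \<times> Is J (Suc 0) l \<times> Rs J 0 l"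
      using R m by (auto simp: Is_def)
    moreover have "v = ?g (?P q, ?P r, t)" using vv by simp
    ultimately show "v \<in> ?g ` (Is J (Suc 0) l \<times> Is J (Suc 0) l \<times> Rs J 0 l)" by blast
  next
    fix v assume "v \<in> ?g ` (Is J (Suc 0) l \<times> Is J (Suc 0) l \<times> Rs J 0 l)"
    then obtain x where x: "x \<in> Is J (Suc 0) l \<times> Is J (Suc 0) l \<times> Rs J 0 l" "v = ?g x"
      by (rule imageE)
    obtain u w t where xx: "x = (u, w, t)" by (cases x) auto
    have uwt: "u \<in> Is J (Suc 0) l" "w \<in> Is J (Suc 0) l" "t \<in> Rs J 0 l" using x(1) xx by auto
    have vv: "v = G4 J a b (?P t) u w t" using x(2) xx by simp
    obtain q where q: "q \<in> MJ J" "u = ?P q" using uwt(1) by (auto simp: Is_def)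
    obtain r where r: "r \<in> MJ J" "w = ?P r" using uwt(2) by (auto simp: Is_def)
    have mt: "t \<in> MJ J" using uwt(3) by (rule Rs_MJ)
    have "P_act ?JJ (G4 J a b t q r 0) = G4 J a b (?P t) (?P q) (?P r) (?P 0 + t)"
      by (rule G4_P[OF ev mt q(1) r(1) MJ_zero])
    then have "v = P_act ?JJ (G4 J a b t q r 0)" using vv q(2) r(2) by simp
    moreover have "G4 J a b t q r 0 \<in> MJ ?JJ" by (rule G4_MJ[OF mt q(1) r(1) MJ_zero])
    moreover have "v \<in> Rs ?JJ 0 l"
    proof -
      have "?P t \<in> Rs J (Suc (Suc 0)) l" by (rule Rs_P[OF fin uwt(3)])
      moreover have "u \<in> Rs J (Suc 0) l" "w \<in> Rs J (Suc 0) l" using uwt by (auto simp: Is_def)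
      ultimately show ?thesis unfolding vv q(2) r(2) G4_Rs[OF MJ_P MJ_P MJ_P mt] using uwt(3) q(2) r(2) by simp
    qed
    ultimately show "v \<in> Is ?JJ 0 l" unfolding Is_def by (intro IntI CollectI) blast+
  qed
  have "card (Ks ?JJ 0 l) = card (Ks J (Suc 0) l \<times> Ks J (Suc 0) l \<times> Rs J 0 l)"
    unfolding K by (rule card_image, rule inj_on_subset[OF inj]) (use KsMJ RsMJ in blast)
  moreover have "card (Is ?JJ 0 l) = card (Is J (Suc 0) l \<times> Is J (Suc 0) l \<times> Rs J 0 l)"
    unfolding I by (rule card_image, rule inj_on_subset[OF inj]) (use IsMJ RsMJ in blast)
  ultimately show ?thesis by (simp add: card_cartesian_product)
qed

end


lemma P_empty: "P_act {} f = 0"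
proof
  fix I show "P_act {} f I = 0 I"
  proof (cases "I = {}")
    case True
    show ?thesis using True unfolding P_act_def by (auto intro!: sum.neutral)
  qed (simp add: P_act_def)
qed

lemma base_case: "card (Ks {} 0 l) = 2 ^ (if l = 0 then 2 ^ 0 else 0) * card (Is {} 0 l)"
proof -
  have Is0: "Is {} 0 l = {0}"
    by (auto simp: Is_def P_empty Rs_def intro: exI[of _ 0])
  show ?thesis
  proof (cases "l = 0")
    case False
    then have "Ks {} 0 l = {0}" using Ks_big[of l "0"] 
      by (auto simp: Ks_def Rs_def fun_eq_iff)
    then show ?thesis using False Is0 by simp
  next
    case True
    define d where "d = (\<lambda>I::nat set. if I = {} then (1::bit) else 0)"
    have "Ks {} 0 l = {0, d}"
    proof (intro equalityI subsetI)
      fix f assume f: "f \<in> Ks {} 0 l"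
      then have "f \<in> MJ {}" by (simp add: Ks_def Rs_def)
      then have z: "\<And>I. I \<noteq> {} \<Longrightarrow> f I = 0" using MJ_zero_outside by blast
      show "f \<in> {0, d}"
      proof (cases "f {} = 0")
        case True
        have "f = 0"
        proof
          fix I show "f I = 0 I" using True z by (cases "I = {}") auto
        qed
        then show ?thesis by simp
      next
        case False
        have "f = d"
        proof
          fix I show "f I = d I" using False z by (cases "I = {}") (auto simp: d_def)
        qed
        then show ?thesis by simp
      qed
    next
      fix f assume "f \<in> {0, d}"
      moreover have "d \<in> Ks {} 0 l"
        using True by (auto simp: Ks_def Rs_def MJ_def d_def P_empty)
      moreover have "0 \<in> Ks {} 0 l" by (simp add: Ks_def)
      ultimately show "f \<in> Ks {} 0 l" by auto
    qed
    moreover have "d \<noteq> 0" by (simp add: d_def fun_eq_iff)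
    ultimately show ?thesis using True Is0 by simp
  qed
qed

lemma even_thm:
  "finite J \<Longrightarrow> card J = 2 * t \<Longrightarrow>
     card (Ks J 0 l) = 2 ^ (if l = t then 2 ^ t else 0) * card (Is J 0 l)"
proof (induction t arbitrary: J l)
  case 0
  then have "J = {}" by simp
  then show ?case using base_case by simp
next
  case (Suc t)
  have "J \<noteq> {}" using Suc.prems by auto
  then obtain a where a: "a \<in> J" by blast
  have "card (J - {a}) = Suc (2 * t)" using Suc.prems a by (simp add: card_Diff_singleton)
  then have "J - {a} \<noteq> {}" by (metis card.empty Zero_not_Suc)
  then obtain b where b: "b \<in> J - {a}" by blast
  define J0 where "J0 = J - {a, b}"
  have fin0: "finite J0" using Suc.prems by (simp add: J0_def)
  have JJ: "J = insert b (insert a J0)" using a b by (auto simp: J0_def)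
  have ab: "a \<notin> J0" "b \<notin> J0" "a \<noteq> b" using b by (auto simp: J0_def)
  have c0: "card J0 = 2 * t"
  proof -
    have "card J = Suc (Suc (card J0))" unfolding JJ using fin0 ab by simp
    then show ?thesis using Suc.prems by simp
  qed
  interpret tp: two_pts J0 a b using fin0 ab by unfold_locales auto
  have ev: "even (card J0)" using c0 by simp
  have shift: "card (Ks J0 (Suc 0) l) = 2 ^ (if l = Suc t then 2 ^ t else 0) * card (Is J0 (Suc 0) l)"
  proof (cases "l = 0")
    case True
    then show ?thesis using Ks_big[of l "Suc 0"] Is_big[of l "Suc 0"] by simp
  next
    case False
    then have "Ks J0 (Suc 0) l = Ks J0 0 (l - 1)" "Is J0 (Suc 0) l = Is J0 0 (l - 1)"
      using Ks_shift[of "Suc 0" l] Is_shift[of "Suc 0" l] by auto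
    moreover have "(l - 1 = t) = (l = Suc t)" using False by auto
    ultimately show ?thesis using Suc.IH[OF fin0 c0, of "l - 1"] by simp
  qed
  define e where "e = (if l = Suc t then 2 ^ t else 0::nat)"
  have "card (Ks J 0 l) = card (Ks J0 (Suc 0) l) * card (Ks J0 (Suc 0) l) * card (Rs J0 0 l)"
    "card (Is J 0 l) = card (Is J0 (Suc 0) l) * card (Is J0 (Suc 0) l) * card (Rs J0 0 l)"
    using tp.even_step[OF ev, of l] JJ by auto
  then have "card (Ks J 0 l) = 2 ^ e * 2 ^ e * card (Is J 0 l)"
    using shift unfolding e_def by simp
  also have "2 ^ e * 2 ^ e = (2::nat) ^ (if l = Suc t then 2 ^ Suc t else 0)"
    unfolding e_def by (simp add: power_add[symmetric] mult_2)
  finally show ?case .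
qed

lemma shift1:
  assumes "finite J" "card J = 2 * t"
  shows "card (Ks J (Suc 0) l) = 2 ^ (if l = Suc t then 2 ^ t else 0) * card (Is J (Suc 0) l)"
proof (cases "l = 0")
  case True
  then show ?thesis using Ks_big[of l "Suc 0"] Is_big[of l "Suc 0"] by simp
next
  case False
  then have "Ks J (Suc 0) l = Ks J 0 (l - 1)" "Is J (Suc 0) l = Is J 0 (l - 1)"
    using Ks_shift[of "Suc 0" l] Is_shift[of "Suc 0" l] by auto
  moreover have "(l - 1 = t) = (l = Suc t)" using False by auto
  ultimately show ?thesis using even_thm[OF assms, of "l - 1"] by simp
qed

lemma odd_thm:
  assumes fin: "finite J" and c: "card J = 2 * t + 1"
  shows "card (Ks J 0 l) = 2 ^ (if l = t \<or> l = t + 1 then 2 ^ t else 0) * card (Is J 0 l)"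
proof -
  have "J \<noteq> {}" using c by auto
  then obtain a where a: "a \<in> J" by blast
  define J0 where "J0 = J - {a}"
  have fin0: "finite J0" using fin by (simp add: J0_def)
  have JJ: "J = insert a J0" and aJ: "a \<notin> J0" using a by (auto simp: J0_def)
  have c0: "card J0 = 2 * t" using c fin a by (simp add: J0_def)
  have ev: "even (card J0)" using c0 by simp
  have st: "card (Ks J 0 l) = card (Ks J0 1 l) * card (Ks J0 0 l)"
     "card (Is J 0 l) = card (Is J0 1 l) * card (Is J0 0 l)"
    using odd_step[OF fin0 aJ ev, of l] JJ by auto
  have e1: "card (Ks J0 1 l) = 2 ^ (if l = Suc t then 2 ^ t else 0) * card (Is J0 1 l)"
    using shift1[OF fin0 c0, of l] by simp
  have e0: "card (Ks J0 0 l) = 2 ^ (if l = t then 2 ^ t else 0) * card (Is J0 0 l)"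
    by (rule even_thm[OF fin0 c0])
  have "card (Ks J 0 l) = 2 ^ (if l = Suc t then 2 ^ t else 0) * 2 ^ (if l = t then 2 ^ t else 0) * card (Is J 0 l)"
    using st e1 e0 by (simp add: ac_simps)
  also have "(2::nat) ^ (if l = Suc t then 2 ^ t else 0) * 2 ^ (if l = t then 2 ^ t else 0)
      = 2 ^ (if l = t \<or> l = t + 1 then 2 ^ t else 0)"
    by auto
  finally show ?thesis .
qed

lemma Ks_subspace: "vs.subspace (Ks J 0 l)"
  unfolding vs.subspace_def
proof (intro conjI ballI allI)
  show "0 \<in> Ks J 0 l" by (simp add: Ks_def)
  fix x y assume "x \<in> Ks J 0 l" "y \<in> Ks J 0 l"
  then show "x + y \<in> Ks J 0 l" by (simp add: Ks_def Rs_add P_add)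
next
  fix c x assume "x \<in> Ks J 0 l"
  then show "scaleF2 c x \<in> Ks J 0 l" by (simp add: scaleF2_cases Ks_def)
qed

lemma Is_subspace: "vs.subspace (Is J 0 l)"
  unfolding vs.subspace_def
proof (intro conjI ballI allI)
  show "0 \<in> Is J 0 l" unfolding Is_def by (intro IntI CollectI Rs_zero exI[of _ 0]) simp
  fix x y assume x: "x \<in> Is J 0 l" and y: "y \<in> Is J 0 l"
  then obtain w1 w2 where w: "w1 \<in> MJ J" "x = P_act J w1" "w2 \<in> MJ J" "y = P_act J w2"
    by (auto simp: Is_def)
  have "x + y = P_act J (w1 + w2)" using w by (simp add: P_add)
  moreover have "w1 + w2 \<in> MJ J" using w by (simp add: MJ_add)
  moreover have "x + y \<in> Rs J 0 l" using x y by (simp add: Is_def Rs_add)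
  ultimately show "x + y \<in> Is J 0 l" unfolding Is_def by blast
next
  fix c x assume "x \<in> Is J 0 l"
  moreover have "0 \<in> Is J 0 l" unfolding Is_def by (intro IntI CollectI Rs_zero exI[of _ 0]) simp
  ultimately show "scaleF2 c x \<in> Is J 0 l" by (simp add: scaleF2_cases)
qed

lemma ker_eq: "margolis_ker J l = Ks J 0 l"
  by (simp add: margolis_ker_def Ks_def redlen_part_def Rs_def zero_fun_def)
lemma im_eq: "margolis_im J l = Is J 0 l"
  by (simp add: margolis_im_def Is_def redlen_part_def Rs_def)

lemma dim_from_card:
  assumes fin: "finite J" and h: "card (Ks J 0 l) = 2 ^ h * card (Is J 0 l)"
  shows "margolis_dim J l = h"
proof -
  have fK: "finite (Ks J 0 l)"
    by (rule finite_subset[OF _ MJ_finite[OF fin]]) (auto simp: Ks_def Rs_def)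
  have fI: "finite (Is J 0 l)"
    by (rule finite_subset[OF _ MJ_finite[OF fin]]) (auto simp: Is_def Rs_def)
  have "(2::nat) ^ vs.dim (Ks J 0 l) = 2 ^ h * 2 ^ vs.dim (Is J 0 l)"
    using h card_subspace_F2[OF Ks_subspace fK] card_subspace_F2[OF Is_subspace fI] by simp
  then have "(2::nat) ^ vs.dim (Ks J 0 l) = 2 ^ (h + vs.dim (Is J 0 l))"
    by (simp add: power_add)
  then have "vs.dim (Ks J 0 l) = h + vs.dim (Is J 0 l)"
    by (rule power_inject_exp[THEN iffD1, rotated]) simp
  then show ?thesis unfolding margolis_dim_def ker_eq im_eq by simp
qed

theorem mainTheorem9:
  fixes J :: "nat set" and l t :: nat
  assumes "finite J" and "0 \<notin> J"
  shows "(card J = 2 * t \<longrightarrow> margolis_dim J l = (if l = t then 2 ^ t else 0))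
       \<and> (card J = 2 * t + 1 \<longrightarrow> margolis_dim J l = (if l = t \<or> l = t + 1 then 2 ^ t else 0))"
  using dim_from_card[OF assms(1) even_thm[OF assms(1)]] dim_from_card[OF assms(1) odd_thm[OF assms(1)]]
  by blast


end
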